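(* Let $0<\lambda\le\Lambda$, let $\Omega \subset \mathbb R\times\mathbb R^d$ be any set, and let $u:\Omega\to\mathbb R$ be a function which at every point of $\Omega$ is twice differentiable in $x$ and differentiable in $t$. The following are equivalent: (1) There exists a function $F$ on real symmetric $d\times d$ matrices, uniformly elliptic with constants $\lambda,\Lambda$, such that $u_t(t,x) = F(D^2u(t,x))$ for all $(t,x)\in\Omega$. (2) For every pair of points $(t,x),(s,y)\in\Omega$, $$P^-\big(D^2u(t,x) - D^2u(s,y)\big) \le u_t(t,x) - u_t(s,y) \le P^+\big(D^2u(t,x)-D^2u(s,y)\big).$$
   Context: A function $F$ on real symmetric $d\times d$ matrices is uniformly elliptic with constants $0<\lambda\le\Lambda$ if for all symmetric $A,B$ with $B \ge 0$, $\lambda \operatorname{tr} B \le F(A+B) - F(A) \le \Lambda \operatorname{tr} B$. The Pucci operators are $P^+(M) = \Lambda \operatorname{tr} M_+ - \lambda \operatorname{tr} M_-$ and $P^-(M) = \lambda \operatorname{tr} M_+ - \Lambda \operatorname{tr} M_-$, where $M=M_+-M_-$ with $M_\pm$ positive semidefinite with orthogonal ranges (positive and negative parts of $M$). *)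

theory Defs
  imports "HOL-Analysis.Analysis"
begin

definition symmetric_mat :: "real^'n^'n \<Rightarrow> bool" where
  "symmetric_mat M \<longleftrightarrow> transpose M = M"

definition psd_mat :: "real^'n^'n \<Rightarrow> bool" where
  "psd_mat M \<longleftrightarrow> symmetric_mat M \<and> (\<forall>x. 0 \<le> x \<bullet> (M *v x))"

definition pos_part_mat :: "real^'n^'n \<Rightarrow> real^'n^'n" where
  "pos_part_mat M = (THE P. \<exists>N. psd_mat P \<and> psd_mat N \<and>
       (\<forall>x y. (P *v x) \<bullet> (N *v y) = 0) \<and> M = P - N)"

definition neg_part_mat :: "real^'n^'n \<Rightarrow> real^'n^'n" where
  "neg_part_mat M = pos_part_mat M - M"

definition pucci_plus :: "real \<Rightarrow> real \<Rightarrow> real^'n^'n \<Rightarrow> real" where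
  "pucci_plus lam Lam M = Lam * trace (pos_part_mat M) - lam * trace (neg_part_mat M)"

definition pucci_minus :: "real \<Rightarrow> real \<Rightarrow> real^'n^'n \<Rightarrow> real" where
  "pucci_minus lam Lam M = lam * trace (pos_part_mat M) - Lam * trace (neg_part_mat M)"

text \<open>Uniform ellipticity of F on symmetric matrices (values of F off symmetric matrices are irrelevant).\<close>

definition uniformly_elliptic :: "real \<Rightarrow> real \<Rightarrow> (real^'n^'n \<Rightarrow> real) \<Rightarrow> bool" where
  "uniformly_elliptic lam Lam F \<longleftrightarrow>
     (\<forall>A B. symmetric_mat A \<and> psd_mat B \<longrightarrow>
        lam * trace B \<le> F (A + B) - F A \<and> F (A + B) - F A \<le> Lam * trace B)"

definition twice_diff_at :: "(real^'n \<Rightarrow> real) \<Rightarrow> real^'n \<Rightarrow> real^'n^'n \<Rightarrow> bool" where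
  "twice_diff_at f x H \<longleftrightarrow>
     (\<exists>g e. 0 < e \<and> (\<forall>y\<in>ball x e. (f has_derivative (\<lambda>h. g y \<bullet> h)) (at y)) \<and>
            (g has_derivative (\<lambda>h. H *v h)) (at x))"

end

theory Submission
  imports Defs
begin


lemma sym_dot:
  fixes M :: "real^'n^'n"
  assumes "symmetric_mat M"
  shows "(M *v x) \<bullet> y = x \<bullet> (M *v y)"
proof -
  have "(M *v x) \<bullet> y = (transpose M *v x) \<bullet> y" using assms by (simp add: symmetric_mat_def)
  also have "\<dots> = x \<bullet> (M *v y)" by (simp add: dot_lmul_matrix)
  finally show ?thesis .
qed

lemma quad_zero:
  fixes a r :: real
  assumes "\<And>t. 2*t*a \<le> t^2*r" "a \<ge> 0" "r \<ge> 0"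
  shows "a = 0"
proof (rule ccontr)
  assume "a \<noteq> 0"
  then have a: "a > 0" using assms by auto
  define t where "t = a/(r+1)"
  have t: "t > 0" using a assms(3) by (simp add: t_def)
  have "t*(2*a) \<le> t*(t*r)" using assms(1)[of t] by (simp add: power2_eq_square algebra_simps)
  then have "2*a \<le> t*r" using t by simp
  moreover have "t*r \<le> a" using a assms(3) by (simp add: t_def field_simps)
  ultimately show False using a by simp
qed

lemma eigvec_exists:
  fixes M :: "real^'n^'n"
  assumes sym: "symmetric_mat M" and S: "subspace S" and inv: "\<forall>x\<in>S. M *v x \<in> S"
    and ne: "S \<noteq> {0}"
  shows "\<exists>v\<in>S. norm v = 1 \<and> M *v v = (v \<bullet> (M *v v)) *\<^sub>R v"
proof -
  define K where "K = S \<inter> sphere 0 1"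
  have cK: "compact K" unfolding K_def
    by (simp add: S closed_subspace compact_Int_closed compact_sphere inf_commute closed_Int_compact)
  obtain x0 where x0: "x0 \<in> S" "x0 \<noteq> 0" using ne S subspace_0 by blast
  have "x0 /\<^sub>R norm x0 \<in> K" using x0 S by (simp add: K_def subspace_scale)
  then have Kne: "K \<noteq> {}" by blast
  define q where "q = (\<lambda>x::real^'n. x \<bullet> (M *v x))"
  have cq: "continuous_on K q" unfolding q_def
    by (intro continuous_intros linear_continuous_on matrix_vector_mul_linear)
  obtain v where v: "v \<in> K" "\<And>y. y \<in> K \<Longrightarrow> q y \<le> q v"
    using continuous_attains_sup[OF cK Kne cq] by blast
  define mu where "mu = q v"
  have vS: "v \<in> S" and nv: "norm v = 1" using v(1) by (auto simp: K_def)
  have bound: "q x \<le> mu * (norm x)^2" if "x \<in> S" for x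
  proof (cases "x = 0")
    case True then show ?thesis by (simp add: q_def)
  next
    case False
    have "x /\<^sub>R norm x \<in> K" using False that S by (simp add: K_def subspace_scale)
    then have "q (x /\<^sub>R norm x) \<le> mu" using v(2) mu_def by blast
    moreover have "q (x /\<^sub>R norm x) = q x / (norm x)^2"
      using False by (simp add: q_def matrix_vector_mult_scaleR power2_eq_square field_simps)
    ultimately have "q x / (norm x)^2 \<le> mu" by simp
    then show ?thesis using False by (simp add: field_simps)
  qed
  define w where "w = mu *\<^sub>R v - M *v v"
  have wS: "w \<in> S" unfolding w_def using S vS inv
    by (simp add: subspace_diff subspace_scale)
  have neg: "-2*t*(w \<bullet> w) \<le> t^2 * (mu * (w \<bullet> w) - q w)" for t
  proof -
    have "v + t *\<^sub>R w \<in> S" using S vS wS by (simp add: subspace_add subspace_scale)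
    then have h: "q (v + t *\<^sub>R w) \<le> mu * (norm (v + t *\<^sub>R w))^2" by (rule bound)
    have vv: "v \<bullet> v = 1" using nv by (simp add: norm_eq_1)
    have e1: "q (v + t *\<^sub>R w) = mu + 2*t*(w \<bullet> (M *v v)) + t^2 * q w"
      unfolding q_def mu_def
      by (simp add: algebra_simps matrix_vector_mult_scaleR inner_add_left inner_add_right
            sym_dot[OF sym, of w v] power2_eq_square inner_commute[of v "M *v w"])
    have e2: "(norm (v + t *\<^sub>R w))^2 = 1 + 2*t*(v \<bullet> w) + t^2 * (w \<bullet> w)"
      unfolding power2_norm_eq_inner
      by (simp add: inner_add_left inner_add_right vv algebra_simps
             power2_eq_square inner_commute[of w v])
    have e3: "w \<bullet> (M *v v) = mu * (v \<bullet> w) - w \<bullet> w"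
      unfolding w_def by (simp add: inner_diff_left inner_diff_right algebra_simps inner_commute)
    show ?thesis using h e1 e2 e3 by (simp add: algebra_simps)
  qed
  have "2*t*(w \<bullet> w) \<le> t^2 * (mu * (w \<bullet> w) - q w)" for t
    using neg[of "-t"] by simp
  moreover have "mu * (w \<bullet> w) - q w \<ge> 0" using bound[OF wS] by (simp add: power2_norm_eq_inner)
  ultimately have "w \<bullet> w = 0" using quad_zero by (metis inner_ge_zero)
  then have "w = 0" by simp
  then have "M *v v = mu *\<^sub>R v" unfolding w_def by simp
  then show ?thesis using vS nv mu_def q_def by auto
qed

lemma eigbasis_sub:
  fixes M :: "real^'n^'n"
  assumes sym: "symmetric_mat M"
  shows "subspace S \<Longrightarrow> (\<forall>x\<in>S. M *v x \<in> S) \<Longrightarrow>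
    \<exists>B. B \<subseteq> S \<and> finite B \<and> pairwise orthogonal B \<and>
        (\<forall>v\<in>B. norm v = 1 \<and> M *v v = (v \<bullet> (M *v v)) *\<^sub>R v) \<and> span B = S"
proof (induction "dim S" arbitrary: S rule: less_induct)
  case less
  show ?case
  proof (cases "S = {0}")
    case True
    then show ?thesis by (intro exI[of _ "{}"]) auto
  next
    case False
    obtain v where v: "v \<in> S" "norm v = 1" "M *v v = (v \<bullet> (M *v v)) *\<^sub>R v"
      using eigvec_exists[OF sym less.prems False] by blast
    define S' where "S' = S \<inter> {x. v \<bullet> x = 0}"
    have sS': "subspace S'" unfolding S'_def using less.prems(1)
      by (simp add: subspace_inter subspace_hyperplane)
    have invS': "\<forall>x\<in>S'. M *v x \<in> S'"
    proof
      fix x assume x: "x \<in> S'"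
      have "v \<bullet> (M *v x) = (M *v v) \<bullet> x" using sym_dot[OF sym, of v x] by simp
      also have "\<dots> = (v \<bullet> (M *v v)) * (v \<bullet> x)"
        by (metis inner_scaleR_left v(3))
      also have "\<dots> = 0" using x by (simp add: S'_def)
      finally show "M *v x \<in> S'" using x less.prems(2) by (simp add: S'_def)
    qed
    have "v \<noteq> 0" using v by auto
    then have vnot: "v \<notin> S'" by (simp add: S'_def)
    have e1: "span S' = S'" using sS' by (simp add: span_eq_iff)
    have e2: "span S = S" using less.prems(1) by (simp add: span_eq_iff)
    have "S' \<subset> S" using v(1) vnot unfolding S'_def by blast
    then have "span S' \<subset> span S" unfolding e1 e2 .
    then have "dim S' < dim S" by (rule dim_psubset)
    then obtain B' where B': "B' \<subseteq> S'" "finite B'" "pairwise orthogonal B'"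
        "\<forall>v\<in>B'. norm v = 1 \<and> M *v v = (v \<bullet> (M *v v)) *\<^sub>R v" "span B' = S'"
      using less.hyps sS' invS' by blast
    show ?thesis
    proof (intro exI[of _ "insert v B'"] conjI)
      show "insert v B' \<subseteq> S" using B'(1) v(1) by (auto simp: S'_def)
      show "finite (insert v B')" using B' by simp
      show "pairwise orthogonal (insert v B')"
        using B'(1,3) by (auto simp: pairwise_insert S'_def orthogonal_def inner_commute)
      show "\<forall>x\<in>insert v B'. norm x = 1 \<and> M *v x = (x \<bullet> (M *v x)) *\<^sub>R x"
        using B'(4) v by auto
      show "span (insert v B') = S"
      proof
        show "span (insert v B') \<subseteq> S"
          using \<open>insert v B' \<subseteq> S\<close> less.prems(1) by (simp add: span_minimal)
        show "S \<subseteq> span (insert v B')"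
        proof
          fix x assume x: "x \<in> S"
          have "x - (v \<bullet> x) *\<^sub>R v \<in> S'"
            using x v less.prems(1)
            by (simp add: S'_def subspace_diff subspace_scale inner_diff_right norm_eq_1)
          then show "x \<in> span (insert v B')" using B'(5) by (auto simp: span_insert)
        qed
      qed
    qed
  qed
qed

lemma eigbasis:
  fixes M :: "real^'n^'n"
  assumes sym: "symmetric_mat M"
  shows "\<exists>B. finite B \<and> pairwise orthogonal B \<and>
        (\<forall>v\<in>B. norm v = 1 \<and> M *v v = (v \<bullet> (M *v v)) *\<^sub>R v) \<and> span B = UNIV"
  using eigbasis_sub[OF sym, of UNIV] by auto

definition rk1 :: "(real^'n \<Rightarrow> real) \<Rightarrow> (real^'n) set \<Rightarrow> real^'n^'n" where
  "rk1 c B = (\<chi> i j. \<Sum>v\<in>B. c v * v$i * v$j)"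

lemma rk1_mv: "rk1 c B *v x = (\<Sum>v\<in>B. (c v * (v \<bullet> x)) *\<^sub>R v)"
  by (simp add: vec_eq_iff rk1_def matrix_vector_mult_def inner_vec_def sum_component
      sum_distrib_left sum_distrib_right sum.swap[of _ B] algebra_simps)

lemma rk1_trace: "trace (rk1 c B) = (\<Sum>v\<in>B. c v * (v \<bullet> v))"
  by (simp add: trace_def rk1_def inner_vec_def sum_distrib_left sum.swap[of _ B] algebra_simps)

lemma rk1_sym: "symmetric_mat (rk1 c B)"
  by (simp add: symmetric_mat_def transpose_def rk1_def vec_eq_iff algebra_simps)

locale eb =
  fixes M :: "real^'n^'n" and B :: "(real^'n) set"
  assumes sym: "symmetric_mat M" and fin: "finite B" and orth: "pairwise orthogonal B"
    and unit: "\<And>v. v \<in> B \<Longrightarrow> norm v = 1"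
    and eig: "\<And>v. v \<in> B \<Longrightarrow> M *v v = (v \<bullet> (M *v v)) *\<^sub>R v"
    and spanB: "span B = UNIV"
begin

definition ev where "ev v = v \<bullet> (M *v v)"
definition pos where "pos v = max (ev v) 0"
definition neg where "neg v = max (- ev v) 0"
definition PP where "PP = rk1 pos B"
definition NN where "NN = rk1 neg B"

lemma dotB: "v \<in> B \<Longrightarrow> w \<in> B \<Longrightarrow> v \<bullet> w = (if v = w then 1 else 0)"
  using orth unit by (force simp: norm_eq_1 orthogonal_def pairwise_def)

lemma rk1_dot: "w \<in> B \<Longrightarrow> w \<bullet> (rk1 c B *v x) = c w * (w \<bullet> x)"
proof -
  assume w: "w \<in> B"
  have "w \<bullet> (rk1 c B *v x) = (\<Sum>v\<in>B. c v * (v \<bullet> x) * (w \<bullet> v))"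
    by (simp add: rk1_mv inner_sum_right)
  also have "\<dots> = (\<Sum>v\<in>B. if v = w then c w * (w \<bullet> x) else 0)"
    by (rule sum.cong) (auto simp: dotB w)
  also have "\<dots> = c w * (w \<bullet> x)" using fin w by simp
  finally show ?thesis .
qed

lemma vec_eqB:
  assumes h: "\<And>w. w \<in> B \<Longrightarrow> w \<bullet> x = w \<bullet> y"
  shows "x = y"
proof (rule vector_eq_dot_span[of x B y])
  show "x \<in> span B" "y \<in> span B" by (simp_all add: spanB)
qed (rule h)

lemma rk1_psd:
  assumes c: "\<And>v. v \<in> B \<Longrightarrow> c v \<ge> 0"
  shows "psd_mat (rk1 c B)"
  unfolding psd_mat_def
proof (intro conjI allI)
  show "symmetric_mat (rk1 c B)" by (rule rk1_sym)
  fix x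
  have "x \<bullet> (rk1 c B *v x) = (\<Sum>v\<in>B. c v * ((v \<bullet> x) * (v \<bullet> x)))"
    by (simp add: rk1_mv inner_sum_right inner_commute mult.assoc)
  also have "\<dots> \<ge> 0"
  proof (rule sum_nonneg)
    fix v assume "v \<in> B"
    show "0 \<le> c v * ((v \<bullet> x) * (v \<bullet> x))"
      using c[OF \<open>v \<in> B\<close>] zero_le_square by (rule mult_nonneg_nonneg)
  qed
  finally show "0 \<le> x \<bullet> (rk1 c B *v x)" .
qed

lemma evB: "v \<in> B \<Longrightarrow> M *v v = ev v *\<^sub>R v"
  using eig by (simp add: ev_def)

lemma basis_sum: "(\<Sum>w\<in>B. w$i * w$j) = (if i = j then 1 else 0)"
proof -
  have "axis j 1 = (\<Sum>w\<in>B. (axis j 1 \<bullet> w) *\<^sub>R w)"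
    by (rule orthonormal_basis_expand[symmetric]) (auto simp: orth unit fin spanB)
  then have "axis j 1 $ i = (\<Sum>w\<in>B. (axis j 1 \<bullet> w) *\<^sub>R w) $ i" by simp
  then have "axis j 1 $ i = (\<Sum>w\<in>B. w$i * w$j)"
    by (simp add: sum_component inner_axis' mult.commute)
  moreover have "axis j (1::real) $ i = (if i = j then 1 else 0)" by (simp add: axis_def)
  ultimately show ?thesis by simp
qed

lemma trace_B: "trace A = (\<Sum>w\<in>B. w \<bullet> (A *v w))"
proof -
  have "(\<Sum>w\<in>B. w \<bullet> (A *v w)) = (\<Sum>w\<in>B. \<Sum>i\<in>UNIV. \<Sum>j\<in>UNIV. A$i$j * (w$i * w$j))"
    by (simp add: inner_vec_def matrix_vector_mult_def sum_distrib_left algebra_simps)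
  also have "\<dots> = (\<Sum>i\<in>UNIV. \<Sum>j\<in>UNIV. A$i$j * (\<Sum>w\<in>B. w$i * w$j))"
    by (simp add: sum_distrib_left sum.swap[of _ B])
  also have "\<dots> = (\<Sum>i\<in>UNIV. A$i$i)"
    by (simp add: basis_sum if_distrib cong: if_cong)
  finally show ?thesis by (simp add: trace_def)
qed

lemma PN_decomp: "M = PP - NN"
  unfolding matrix_eq
proof
  fix x
  show "M *v x = (PP - NN) *v x"
  proof (rule vec_eqB)
    fix w assume w: "w \<in> B"
    have "w \<bullet> (M *v x) = (M *v w) \<bullet> x" using sym_dot[OF sym, of w x] by simp
    also have "\<dots> = ev w * (w \<bullet> x)" by (simp add: evB w)
    also have "\<dots> = w \<bullet> ((PP - NN) *v x)"
      by (simp add: matrix_vector_mult_diff_rdistrib inner_diff_right PP_def NN_def rk1_dot w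
           pos_def neg_def max_def algebra_simps)
    finally show "w \<bullet> (M *v x) = w \<bullet> ((PP - NN) *v x)" .
  qed
qed

lemma PP_psd: "psd_mat PP" unfolding PP_def by (rule rk1_psd) (simp add: pos_def)
lemma NN_psd: "psd_mat NN" unfolding NN_def by (rule rk1_psd) (simp add: neg_def)

lemma PN_orth: "(PP *v x) \<bullet> (NN *v y) = 0"
proof -
  have "(PP *v x) \<bullet> (NN *v y) = (\<Sum>w\<in>B. neg w * (w \<bullet> y) * (w \<bullet> (PP *v x)))"
    by (simp add: NN_def rk1_mv inner_sum_right inner_commute)
  also have "\<dots> = (\<Sum>w\<in>B. neg w * pos w * ((w \<bullet> y) * (w \<bullet> x)))"
    by (rule sum.cong) (auto simp: PP_def rk1_dot)
  also have "\<dots> = 0" by (rule sum.neutral) (auto simp: neg_def pos_def max_def)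
  finally show ?thesis .
qed

lemma act_on_basis:
  assumes "psd_mat P'" "psd_mat N'" "\<forall>x y. (P' *v x) \<bullet> (N' *v y) = 0" "M = P' - N'"
    and w: "w \<in> B"
  shows "P' *v w = pos w *\<^sub>R w" "N' *v w = neg w *\<^sub>R w"
proof -
  have e: "P' *v w - N' *v w = ev w *\<^sub>R w"
    using evB[OF w] assms(4) by (simp add: matrix_vector_mult_diff_rdistrib)
  have o: "(P' *v w) \<bullet> (N' *v w) = 0" using assms(3) by blast
  have pp: "w \<bullet> (P' *v w) \<ge> 0" "w \<bullet> (N' *v w) \<ge> 0" using assms(1,2) by (auto simp: psd_mat_def)
  have sP: "(P' *v w) \<bullet> (N' *v w) = (P' *v w) \<bullet> (N' *v w)" ..
  have symN: "(N' *v w) \<bullet> w = w \<bullet> (N' *v w)" by (simp add: inner_commute)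
  show "P' *v w = pos w *\<^sub>R w" "N' *v w = neg w *\<^sub>R w"
  proof -
    have "(P' *v w - N' *v w) \<bullet> (N' *v w) = ev w * (w \<bullet> (N' *v w))" by (simp add: e)
    then have A: "- ((N' *v w) \<bullet> (N' *v w)) = ev w * (w \<bullet> (N' *v w))"
      using o by (simp add: inner_diff_left)
    have "(P' *v w - N' *v w) \<bullet> (P' *v w) = ev w * (w \<bullet> (P' *v w))" by (simp add: e inner_commute)
    moreover have "(P' *v w - N' *v w) \<bullet> (P' *v w) = (P' *v w) \<bullet> (P' *v w)"
      using o by (simp add: inner_diff_left inner_diff_right inner_commute[of "N' *v w" "P' *v w"])
    ultimately have C: "(P' *v w) \<bullet> (P' *v w) = ev w * (w \<bullet> (P' *v w))" by simp
    show "P' *v w = pos w *\<^sub>R w" "N' *v w = neg w *\<^sub>R w"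
    proof (atomize(full), cases "ev w > 0")
      case True
      then have "(N' *v w) \<bullet> (N' *v w) \<le> 0" using A pp(2)
        by (smt (verit) mult_pos_neg zero_le_mult_iff)
      then have "N' *v w = 0" by (metis antisym inner_ge_zero inner_eq_zero_iff)
      then show "P' *v w = pos w *\<^sub>R w \<and> N' *v w = neg w *\<^sub>R w"
        using e True by (simp add: pos_def neg_def)
    next
      case False
      then have "(P' *v w) \<bullet> (P' *v w) \<le> 0" using C pp(1)
        by (simp add: mult_nonpos_nonneg)
      then have "P' *v w = 0" by (metis antisym inner_ge_zero inner_eq_zero_iff)
      then show "P' *v w = pos w *\<^sub>R w \<and> N' *v w = neg w *\<^sub>R w"
        using e False by (simp add: pos_def neg_def) (metis minus_minus)
    qed
  qed
qed

lemma uniq: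
  assumes "psd_mat P'" "psd_mat N'" "\<forall>x y. (P' *v x) \<bullet> (N' *v y) = 0" "M = P' - N'"
  shows "P' = PP"
  unfolding matrix_eq
proof
  fix x
  show "P' *v x = PP *v x"
  proof (rule vec_eqB)
    fix w assume w: "w \<in> B"
    have "w \<bullet> (P' *v x) = (P' *v w) \<bullet> x"
      using sym_dot[of P' w x] assms(1) by (simp add: psd_mat_def)
    also have "\<dots> = pos w * (w \<bullet> x)" using act_on_basis[OF assms w] by simp
    also have "\<dots> = w \<bullet> (PP *v x)" by (simp add: PP_def rk1_dot w)
    finally show "w \<bullet> (P' *v x) = w \<bullet> (PP *v x)" .
  qed
qed

lemma pos_part_eq: "pos_part_mat M = PP"
  unfolding pos_part_mat_def
proof (rule the_equality)
  show "\<exists>N. psd_mat PP \<and> psd_mat N \<and> (\<forall>x y. (PP *v x) \<bullet> (N *v y) = 0) \<and> M = PP - N"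
    using PP_psd NN_psd PN_orth PN_decomp by blast
qed (use uniq in blast)

lemma neg_part_eq: "neg_part_mat M = NN"
proof -
  have "M = PP - NN" by (rule PN_decomp)
  then have "PP - M = NN" by (simp add: algebra_simps)
  then show ?thesis unfolding neg_part_mat_def pos_part_eq .
qed

lemma minimal:
  assumes "psd_mat P'" "psd_mat N'" "M = P' - N'"
  shows "trace PP \<le> trace P'"
proof -
  have "trace P' - trace PP = (\<Sum>w\<in>B. w \<bullet> ((P' - PP) *v w))"
    by (simp add: trace_B[of P'] trace_B[of PP] trace_B[of "P' - PP"] sum_subtractf
        matrix_vector_mult_diff_rdistrib inner_diff_right)
  also have "\<dots> \<ge> 0"
  proof (rule sum_nonneg)
    fix w assume w: "w \<in> B"
    show "w \<bullet> ((P' - PP) *v w) \<ge> 0"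
    proof (cases "ev w > 0")
      case True
      have "P' = M + N'" using assms(3) by (simp add: algebra_simps)
      moreover have "PP = M + NN" using PN_decomp by (simp add: algebra_simps)
      ultimately have "P' - PP = N' - NN" by (simp add: algebra_simps)
      moreover have "w \<bullet> (NN *v w) = 0" using True by (simp add: NN_def rk1_dot w neg_def)
      ultimately show ?thesis using assms(2)
        by (simp add: psd_mat_def matrix_vector_mult_diff_rdistrib inner_diff_right)
    next
      case False
      have "w \<bullet> (PP *v w) = 0" using False by (simp add: PP_def rk1_dot w pos_def)
      then show ?thesis using assms(1)
        by (simp add: psd_mat_def matrix_vector_mult_diff_rdistrib inner_diff_right)
    qed
  qed
  finally show ?thesis by simp
qed

end

lemma eb_exists: "symmetric_mat M \<Longrightarrow> \<exists>B. eb M B"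
  using eigbasis[of M] unfolding eb_def by blast

lemma pp_props:
  fixes M :: "real^'n^'n"
  assumes "symmetric_mat M"
  shows "psd_mat (pos_part_mat M)" "psd_mat (neg_part_mat M)"
    "M = pos_part_mat M - neg_part_mat M"
proof -
  obtain B where "eb M B" using eb_exists[OF assms] by blast
  then interpret eb M B .
  show "psd_mat (pos_part_mat M)" "psd_mat (neg_part_mat M)"
    "M = pos_part_mat M - neg_part_mat M"
    using pos_part_eq neg_part_eq PP_psd NN_psd PN_decomp by auto
qed

lemma pp_min:
  fixes M :: "real^'n^'n"
  assumes "symmetric_mat M" "psd_mat P'" "psd_mat N'" "M = P' - N'"
  shows "trace (pos_part_mat M) \<le> trace P'"
proof -
  obtain B where "eb M B" using eb_exists[OF assms(1)] by blast
  then interpret eb M B .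
  show ?thesis using minimal[OF assms(2-4)] pos_part_eq by simp
qed



lemma psd_sym: "psd_mat A \<Longrightarrow> symmetric_mat A" by (simp add: psd_mat_def)

lemma sym_add: "symmetric_mat A \<Longrightarrow> symmetric_mat B \<Longrightarrow> symmetric_mat (A + B)"
  by (simp add: symmetric_mat_def transpose_def vec_eq_iff)
lemma sym_diff: "symmetric_mat A \<Longrightarrow> symmetric_mat B \<Longrightarrow> symmetric_mat (A - B)"
  by (simp add: symmetric_mat_def transpose_def vec_eq_iff)
lemma sym_0: "symmetric_mat 0"
  by (simp add: symmetric_mat_def transpose_def vec_eq_iff)
lemma psd_0: "psd_mat 0" by (simp add: psd_mat_def sym_0)
lemma psd_add: "psd_mat A \<Longrightarrow> psd_mat B \<Longrightarrow> psd_mat (A + B)"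
  by (simp add: psd_mat_def sym_add matrix_vector_mult_add_rdistrib inner_add_right)

lemma trace_psd: "psd_mat (A::real^'n^'n) \<Longrightarrow> trace A \<ge> 0"
  unfolding trace_def
proof (rule sum_nonneg)
  fix i assume "psd_mat A"
  then have "0 \<le> axis i 1 \<bullet> (A *v axis i 1)" by (simp add: psd_mat_def)
  also have "\<dots> = A$i$i" by (simp add: inner_axis' matrix_vector_mul_component inner_axis)
  finally show "0 \<le> A$i$i" .
qed

lemma pucci_plus_le:
  fixes X :: "real^'n^'n"
  assumes "lam \<le> Lam" "symmetric_mat X" "psd_mat P'" "psd_mat N'" "X = P' - N'"
  shows "pucci_plus lam Lam X \<le> Lam * trace P' - lam * trace N'"
proof -
  have m: "trace (pos_part_mat X) \<le> trace P'" using pp_min assms(2-5) by blast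
  have d: "X = pos_part_mat X - neg_part_mat X" using pp_props(3)[OF assms(2)] .
  have t1: "trace (neg_part_mat X) = trace (pos_part_mat X) - trace X"
    using arg_cong[OF d, of trace] by (simp add: trace_sub)
  have t2: "trace N' = trace P' - trace X" using arg_cong[OF assms(5), of trace] by (simp add: trace_sub)
  have "(Lam - lam) * trace (pos_part_mat X) \<le> (Lam - lam) * trace P'"
    using m assms(1) by (simp add: mult_left_mono)
  then show ?thesis unfolding pucci_plus_def t1 t2 by (simp add: algebra_simps)
qed

lemma ell_bounds:
  fixes F :: "real^'n^'n \<Rightarrow> real"
  assumes ue: "uniformly_elliptic lam Lam F" and A: "symmetric_mat A" and B: "symmetric_mat B"
  shows "pucci_minus lam Lam (A - B) \<le> F A - F B \<and> F A - F B \<le> pucci_plus lam Lam (A - B)"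
proof -
  define X where "X = A - B"
  have sX: "symmetric_mat X" using A B sym_diff X_def by blast
  define P where "P = pos_part_mat X"
  define N where "N = neg_part_mat X"
  have P: "psd_mat P" and N: "psd_mat N" and d: "X = P - N"
    using pp_props[OF sX] P_def N_def by auto
  define C where "C = B - N"
  have sC: "symmetric_mat C" using B N C_def sym_diff psd_sym by blast
  have CP: "C + P = A" using d unfolding C_def X_def by (simp add: algebra_simps)
  have CN: "C + N = B" unfolding C_def by simp
  have h1: "lam * trace P \<le> F A - F C \<and> F A - F C \<le> Lam * trace P"
    using ue sC P CP unfolding uniformly_elliptic_def by metis
  have h2: "lam * trace N \<le> F B - F C \<and> F B - F C \<le> Lam * trace N"
    using ue sC N CN unfolding uniformly_elliptic_def by metis
  show ?thesis using h1 h2 unfolding pucci_plus_def pucci_minus_def X_def[symmetric] P_def[symmetric] N_def[symmetric]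
    by linarith
qed

lemma pp_sub:
  fixes X Y :: "real^'n^'n"
  assumes "lam \<le> Lam" "symmetric_mat X" "symmetric_mat Y"
  shows "pucci_plus lam Lam (X + Y) \<le> pucci_plus lam Lam X + pucci_plus lam Lam Y"
proof -
  note px = pp_props[OF assms(2)] and py = pp_props[OF assms(3)]
  have "X + Y = (pos_part_mat X + pos_part_mat Y) - (neg_part_mat X + neg_part_mat Y)"
    using px(3) py(3) by (simp add: algebra_simps)
  then have "pucci_plus lam Lam (X + Y) \<le> Lam * trace (pos_part_mat X + pos_part_mat Y)
      - lam * trace (neg_part_mat X + neg_part_mat Y)"
    by (rule pucci_plus_le[OF assms(1) sym_add[OF assms(2,3)] psd_add[OF px(1) py(1)] psd_add[OF px(2) py(2)]])
  then show ?thesis by (simp add: pucci_plus_def trace_add algebra_simps)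
qed

lemma pp_up:
  fixes X B :: "real^'n^'n"
  assumes "lam \<le> Lam" "symmetric_mat X" "psd_mat B"
  shows "pucci_plus lam Lam (X + B) \<le> pucci_plus lam Lam X + Lam * trace B"
proof -
  note px = pp_props[OF assms(2)]
  have "X + B = (pos_part_mat X + B) - neg_part_mat X"
    using px(3) by (simp add: algebra_simps)
  then have "pucci_plus lam Lam (X + B) \<le> Lam * trace (pos_part_mat X + B)
      - lam * trace (neg_part_mat X)"
    by (rule pucci_plus_le[OF assms(1) sym_add[OF assms(2) psd_sym[OF assms(3)]] psd_add[OF px(1) assms(3)] px(2)])
  then show ?thesis by (simp add: pucci_plus_def trace_add algebra_simps)
qed

lemma pp_lo:
  fixes X B :: "real^'n^'n"
  assumes "lam \<le> Lam" "symmetric_mat X" "psd_mat B"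
  shows "pucci_plus lam Lam X + lam * trace B \<le> pucci_plus lam Lam (X + B)"
proof -
  have sXB: "symmetric_mat (X + B)" using assms sym_add psd_sym by blast
  note px = pp_props[OF sXB]
  have "X = pos_part_mat (X + B) - (neg_part_mat (X + B) + B)"
    using px(3) by (simp add: algebra_simps)
  then have "pucci_plus lam Lam X \<le> Lam * trace (pos_part_mat (X + B))
      - lam * trace (neg_part_mat (X + B) + B)"
    by (rule pucci_plus_le[OF assms(1,2) px(1) psd_add[OF px(2) assms(3)]])
  then show ?thesis by (simp add: pucci_plus_def trace_add algebra_simps)
qed

lemma pp_zero: "lam \<le> Lam \<Longrightarrow> pucci_plus lam Lam (0::real^'n^'n) \<le> 0"
proof -
  assume L: "lam \<le> Lam"
  have "trace (0::real^'n^'n) = 0" by (simp add: trace_def)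
  then show ?thesis using pucci_plus_le[of lam Lam "0::real^'n^'n" 0 0] L sym_0 psd_0 by simp
qed

theorem lemma5p1:
  fixes lam Lam :: real
    and \<Omega> :: "(real \<times> (real^'n)) set"
    and u :: "real \<times> (real^'n) \<Rightarrow> real"
    and ut :: "real \<times> (real^'n) \<Rightarrow> real"
    and D2u :: "real \<times> (real^'n) \<Rightarrow> real^'n^'n"
  assumes "0 < lam" and "lam \<le> Lam"
    and ut: "\<And>t x. (t, x) \<in> \<Omega> \<Longrightarrow> ((\<lambda>s. u (s, x)) has_real_derivative ut (t, x)) (at t)"
    and D2u: "\<And>t x. (t, x) \<in> \<Omega> \<Longrightarrow> twice_diff_at (\<lambda>y. u (t, y)) x (D2u (t, x))"
    and D2u_sym: "\<And>p. p \<in> \<Omega> \<Longrightarrow> symmetric_mat (D2u p)"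
  shows "(\<exists>F. uniformly_elliptic lam Lam F \<and> (\<forall>p\<in>\<Omega>. ut p = F (D2u p)))
     \<longleftrightarrow> (\<forall>p\<in>\<Omega>. \<forall>q\<in>\<Omega>.
            pucci_minus lam Lam (D2u p - D2u q) \<le> ut p - ut q \<and>
            ut p - ut q \<le> pucci_plus lam Lam (D2u p - D2u q))"
proof
  assume "\<exists>F. uniformly_elliptic lam Lam F \<and> (\<forall>p\<in>\<Omega>. ut p = F (D2u p))"
  then obtain F where F: "uniformly_elliptic lam Lam F" "\<forall>p\<in>\<Omega>. ut p = F (D2u p)" by blast
  show "\<forall>p\<in>\<Omega>. \<forall>q\<in>\<Omega>.
            pucci_minus lam Lam (D2u p - D2u q) \<le> ut p - ut q \<and>
            ut p - ut q \<le> pucci_plus lam Lam (D2u p - D2u q)"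
    using ell_bounds[OF F(1) D2u_sym D2u_sym] F(2) by simp
next
  assume H: "\<forall>p\<in>\<Omega>. \<forall>q\<in>\<Omega>.
            pucci_minus lam Lam (D2u p - D2u q) \<le> ut p - ut q \<and>
            ut p - ut q \<le> pucci_plus lam Lam (D2u p - D2u q)"
  note LL = \<open>lam \<le> Lam\<close>
  show "\<exists>F. uniformly_elliptic lam Lam F \<and> (\<forall>p\<in>\<Omega>. ut p = F (D2u p))"
  proof (cases "\<Omega> = {}")
    case True
    have "uniformly_elliptic lam Lam (\<lambda>M::real^'n^'n. Lam * trace M)"
      unfolding uniformly_elliptic_def
    proof (intro allI impI)
      fix A B :: "real^'n^'n" assume "symmetric_mat A \<and> psd_mat B"
      then have "trace B \<ge> 0" using trace_psd by blast
      then show "lam * trace B \<le> Lam * trace (A + B) - Lam * trace A \<and>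
          Lam * trace (A + B) - Lam * trace A \<le> Lam * trace B"
        using LL by (simp add: trace_add algebra_simps mult_right_mono)
    qed
    then show ?thesis using True by blast
  next
    case False
    define g where "g M p = ut p + pucci_plus lam Lam (M - D2u p)" for M p
    define F where "F M = (INF p\<in>\<Omega>. g M p)" for M
    have bdd: "bdd_below (g M ` \<Omega>)" if M: "symmetric_mat M" for M
    proof -
      obtain q where q: "q \<in> \<Omega>" using False by blast
      show ?thesis unfolding bdd_below_def
      proof (intro exI ballI)
        fix y assume "y \<in> g M ` \<Omega>"
        then obtain p where p: "p \<in> \<Omega>" "y = g M p" by blast
        have "ut q - ut p \<le> pucci_plus lam Lam (D2u q - D2u p)" using H p q by blast
        also have "\<dots> \<le> pucci_plus lam Lam (M - D2u p) + pucci_plus lam Lam (D2u q - M)"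
          using pp_sub[OF LL sym_diff[OF M D2u_sym[OF p(1)]] sym_diff[OF D2u_sym[OF q] M]] by simp
        finally show "ut q - pucci_plus lam Lam (D2u q - M) \<le> y" using p by (simp add: g_def)
      qed
    qed
    have ue: "uniformly_elliptic lam Lam F"
      unfolding uniformly_elliptic_def
    proof (intro allI impI)
      fix A B :: "real^'n^'n" assume AB: "symmetric_mat A \<and> psd_mat B"
      have sA: "symmetric_mat A" using AB by simp
      have sAB: "symmetric_mat (A + B)" using AB sym_add psd_sym by blast
      have fg: "g A p + lam * trace B \<le> g (A + B) p \<and> g (A + B) p \<le> g A p + Lam * trace B"
        if p: "p \<in> \<Omega>" for p
      proof -
        have s: "symmetric_mat (A - D2u p)" using AB D2u_sym[OF p] sym_diff by blast
        have e: "A + B - D2u p = (A - D2u p) + B" by (simp add: algebra_simps)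
        show ?thesis unfolding g_def e using pp_lo[OF LL s] pp_up[OF LL s] AB by auto
      qed
      have "F A + lam * trace B \<le> F (A + B)"
        unfolding F_def
      proof (rule cINF_greatest[OF False])
        fix p assume p: "p \<in> \<Omega>"
        have "(INF p\<in>\<Omega>. g A p) \<le> g A p" by (rule cINF_lower[OF bdd[OF sA] p])
        then show "(INF p\<in>\<Omega>. g A p) + lam * trace B \<le> g (A + B) p" using fg[OF p] by linarith
      qed
      moreover have "F (A + B) - Lam * trace B \<le> F A"
        unfolding F_def
      proof (rule cINF_greatest[OF False])
        fix p assume p: "p \<in> \<Omega>"
        have "(INF p\<in>\<Omega>. g (A + B) p) \<le> g (A + B) p" by (rule cINF_lower[OF bdd[OF sAB] p])
        then show "(INF p\<in>\<Omega>. g (A + B) p) - Lam * trace B \<le> g A p" using fg[OF p] by linarith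
      qed
      ultimately show "lam * trace B \<le> F (A + B) - F A \<and> F (A + B) - F A \<le> Lam * trace B"
        by linarith
    qed
    have "ut q = F (D2u q)" if q: "q \<in> \<Omega>" for q
    proof -
      have "F (D2u q) \<le> g (D2u q) q" unfolding F_def by (rule cINF_lower[OF bdd[OF D2u_sym[OF q]] q])
      also have "\<dots> \<le> ut q" using pp_zero[OF LL] by (simp add: g_def)
      finally have 1: "F (D2u q) \<le> ut q" .
      have "ut q \<le> F (D2u q)" unfolding F_def
      proof (rule cINF_greatest[OF False])
        fix p assume p: "p \<in> \<Omega>"
        show "ut q \<le> g (D2u q) p" using H p q by (simp add: g_def) (smt (verit))
      qed
      with 1 show ?thesis by simp
    qed
    then show ?thesis using ue by blast
  qed
qed

end
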